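(* Let $k\ge1$, $s>0$, and let $R\subseteq R'$ be rectangles in $\mathbb{Z}^2$ with dimensions $(a,b)$ and $(a+\ell,b+m)$ respectively, $a,b\ge1$, $\ell,m\ge0$. Then \[ \mathbf{P}\big(D(R,R')\big)\le\exp\!\Big(-(m-2(k-1))\,g_k(as)-(\ell-2(k-1))\,g_k(bs)+\ell m\, s\,\exp\!\big(k\,(g_k(as)+g_k(bs))\big)\Big). \]
   Context: Let $q=e^{-s}$; each site of $\mathbb{Z}^2$ is independently nonempty with probability $1-q$ and empty with probability $q$. A rectangle $\{x_0,\dots,x_0+a-1\}\times\{y_0,\dots,y_0+b-1\}$ has dimensions $(a,b)$. For $R\subseteq R'$, let the left strip $L$ (resp. right strip $L'$) be the set of sites of $R'$ lying in columns strictly to the left (resp. right) of all columns of $R$, and the bottom strip $T$ (resp. top strip $T'$) the set of sites of $R'$ in rows strictly below (resp. above) all rows of $R$; these strips extend over the full height (resp. width) of $R'$, so the left and right strips together have $\ell$ columns and the top and bottom strips together have $m$ rows. $D(R,R')$ is the event that neither $L$ nor $L'$ contains $k$ consecutive columns all of whose sites are empty, and neither $T$ nor $T'$ contains $k$ consecutive rows all of whose sites are empty. Here $g_k(z)=-\log f_k(e^{-z})$, where $f_k:[0,1]\to[0,1]$ is the unique decreasing function with $f_k(x)^k-f_k(x)^{k+1}=x^k-x^{k+1}$. *)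

theory Defs
  imports "HOL-Analysis.Analysis" "HOL-Probability.Probability"
begin

definition rect :: "int \<Rightarrow> int \<Rightarrow> nat \<Rightarrow> nat \<Rightarrow> (int \<times> int) set" where
  "rect x0 y0 a b = {x0 .. x0 + int a - 1} \<times> {y0 .. y0 + int b - 1}"

text \<open>Configurations: w z = True means site z is empty.\<close>
type_synonym config = "int \<times> int \<Rightarrow> bool"

definition empty_cols :: "nat \<Rightarrow> int set \<Rightarrow> int set \<Rightarrow> config \<Rightarrow> bool" where
  "empty_cols k C Rows w \<longleftrightarrow>
     (\<exists>c. {c .. c + int k - 1} \<subseteq> C \<and> (\<forall>x \<in> {c .. c + int k - 1}. \<forall>y \<in> Rows. w (x, y)))"

definition empty_rows :: "nat \<Rightarrow> int set \<Rightarrow> int set \<Rightarrow> config \<Rightarrow> bool" where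
  "empty_rows k Rs Cols w \<longleftrightarrow>
     (\<exists>c. {c .. c + int k - 1} \<subseteq> Rs \<and> (\<forall>y \<in> {c .. c + int k - 1}. \<forall>x \<in> Cols. w (x, y)))"

text \<open>The event D(R,R') for R = rect x0 y0 a b and R' = rect x0' y0' a' b'.\<close>
definition D_event :: "nat \<Rightarrow> int \<Rightarrow> int \<Rightarrow> nat \<Rightarrow> nat \<Rightarrow> int \<Rightarrow> int \<Rightarrow> nat \<Rightarrow> nat \<Rightarrow> config set" where
  "D_event k x0 y0 a b x0' y0' a' b' =
     {w. \<not> empty_cols k {x0' .. x0 - 1} {y0' .. y0' + int b' - 1} w
       \<and> \<not> empty_cols k {x0 + int a .. x0' + int a' - 1} {y0' .. y0' + int b' - 1} w
       \<and> \<not> empty_rows k {y0' .. y0 - 1} {x0' .. x0' + int a' - 1} w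
       \<and> \<not> empty_rows k {y0 + int b .. y0' + int b' - 1} {x0' .. x0' + int a' - 1} w}"

text \<open>Sites outside A are fixed to False; the event D
  only depends on sites of R', so this is the law of the configuration restricted to R'.\<close>
definition site_pmf :: "real \<Rightarrow> (int \<times> int) set \<Rightarrow> config pmf" where
  "site_pmf s A = Pi_pmf A False (\<lambda>_. bernoulli_pmf (exp (- s)))"

definition f_fun :: "nat \<Rightarrow> real \<Rightarrow> real" where
  "f_fun k = (THE f. f \<in> {0..1} \<rightarrow>\<^sub>E {0..1} \<and> antimono_on {0..1} f \<and>
      (\<forall>x \<in> {0..1}. f x ^ k - f x ^ (k + 1) = x ^ k - x ^ (k + 1)))"

definition g_fun :: "nat \<Rightarrow> real \<Rightarrow> real" where
  "g_fun k z = - ln (f_fun k (exp (- z)))"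

end

theory Submission
  imports Defs
begin

definition hh :: "nat \<Rightarrow> real \<Rightarrow> real" where "hh k y = y ^ k - y ^ (k + 1)"
definition cc :: "nat \<Rightarrow> real" where "cc k = real k / (real k + 1)"

lemma hh_deriv: "DERIV (hh k) y :> (real k * y ^ (k - 1) - real (k + 1) * y ^ k)"
proof -
  have e: "real k * y ^ (k - 1) * y = real k * y ^ k"
    by (cases k) (auto simp: algebra_simps)
  show ?thesis unfolding hh_def
    by (rule derivative_eq_intros refl | simp add: e algebra_simps)+
qed

lemma hh_cont: "continuous_on A (hh k)"
  unfolding hh_def by (intro continuous_intros)

lemma deriv_factor:
  assumes "k \<ge> 1"
  shows "real k * y ^ (k - 1) - real (k + 1) * y ^ k = y ^ (k - 1) * (real k - (real k + 1) * y)"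
proof -
  have "y ^ k = y ^ (k - 1) * y" using assms by (metis Suc_diff_le diff_Suc_1 mult.commute power_Suc)
  then show ?thesis by (simp add: algebra_simps)
qed

lemma hh_inc:
  assumes k: "k \<ge> 1" and "0 \<le> x" "x < y" "y \<le> cc k"
  shows "hh k x < hh k y"
proof (rule DERIV_pos_imp_increasing_open[OF \<open>x < y\<close>])
  fix t assume t: "x < t" "t < y"
  have "t * (real k + 1) < y * (real k + 1)" using t by (intro mult_strict_right_mono) auto
  moreover have "y * (real k + 1) \<le> real k" using assms unfolding cc_def by (simp add: field_simps)
  ultimately have "real k - (real k + 1) * t > 0" by (simp add: algebra_simps)
  moreover have "t ^ (k - 1) > 0" using t assms by simp
  ultimately show "\<exists>d. DERIV (hh k) t :> d \<and> d > 0"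
    using hh_deriv[of k t] deriv_factor[OF k, of t] by (metis mult_pos_pos)
qed (rule hh_cont)

lemma hh_dec:
  assumes k: "k \<ge> 1" and "cc k \<le> x" "x < y" "y \<le> 1"
  shows "hh k y < hh k x"
proof -
  have "(\<lambda>t. - hh k t) x < (\<lambda>t. - hh k t) y"
  proof (rule DERIV_pos_imp_increasing_open[OF \<open>x < y\<close>])
    fix t assume t: "x < t" "t < y"
    have c0: "cc k \<ge> 0" unfolding cc_def by simp
    have "x * (real k + 1) < t * (real k + 1)" using t by (intro mult_strict_right_mono) auto
    moreover have "x * (real k + 1) \<ge> real k" using assms unfolding cc_def by (simp add: field_simps)
    ultimately have "real k - (real k + 1) * t < 0" by (simp add: algebra_simps)
    moreover have "t ^ (k - 1) > 0" using t assms c0 by simp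
    ultimately have "- (t ^ (k - 1) * (real k - (real k + 1) * t)) > 0"
      by (simp add: mult_pos_neg)
    then show "\<exists>d. DERIV (\<lambda>t. - hh k t) t :> d \<and> d > 0"
      using DERIV_minus[OF hh_deriv[of k t]] deriv_factor[OF k, of t] by metis
  next
    show "continuous_on {x..y} (\<lambda>t. - hh k t)" using hh_cont by (intro continuous_intros)
  qed
  then show ?thesis by simp
qed

lemma cc_bounds: "k \<ge> 1 \<Longrightarrow> 0 < cc k \<and> cc k < 1"
  unfolding cc_def by (simp add: field_simps)

lemma hh_0: "k \<ge> 1 \<Longrightarrow> hh k 0 = 0" unfolding hh_def by simp
lemma hh_1: "hh k 1 = 0" unfolding hh_def by simp
lemma hh_nonneg: "0 \<le> x \<Longrightarrow> x \<le> 1 \<Longrightarrow> hh k x \<ge> 0"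
proof -
  assume "0 \<le> x" "x \<le> 1"
  then have "x ^ (k+1) \<le> x ^ k" using mult_left_le_one_le[of "x^k" x] by simp
  then show ?thesis unfolding hh_def by simp
qed

lemma hh_inj_low:
  assumes "k \<ge> 1" "0 \<le> x" "x \<le> cc k" "0 \<le> y" "y \<le> cc k" "hh k x = hh k y"
  shows "x = y"
  using hh_inc[OF assms(1), of x y] hh_inc[OF assms(1), of y x] assms
  by (cases x y rule: linorder_cases) auto

lemma hh_inj_high:
  assumes "k \<ge> 1" "cc k \<le> x" "x \<le> 1" "cc k \<le> y" "y \<le> 1" "hh k x = hh k y"
  shows "x = y"
  using hh_dec[OF assms(1), of x y] hh_dec[OF assms(1), of y x] assms
  by (cases x y rule: linorder_cases) auto

lemma hh_le_cc:
  assumes k: "k \<ge> 1" and "0 \<le> x" "x \<le> 1"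
  shows "hh k x \<le> hh k (cc k)"
proof (cases x "cc k" rule: linorder_cases)
  case less then show ?thesis using hh_inc[OF k, of x "cc k"] assms by auto
next
  case greater then show ?thesis using hh_dec[OF k, of "cc k" x] assms by auto
qed simp

definition FF :: "nat \<Rightarrow> real \<Rightarrow> real" where
  "FF k x = (if x \<le> cc k then (THE y. cc k \<le> y \<and> y \<le> 1 \<and> hh k y = hh k x)
             else (THE y. 0 \<le> y \<and> y \<le> cc k \<and> hh k y = hh k x))"

lemma FF_low:
  assumes k: "k \<ge> 1" and x: "0 \<le> x" "x \<le> cc k"
  shows "cc k \<le> FF k x \<and> FF k x \<le> 1 \<and> hh k (FF k x) = hh k x"
proof -
  have c: "0 < cc k" "cc k < 1" using cc_bounds[OF k] by auto
  have "\<exists>y\<ge>cc k. y \<le> 1 \<and> hh k y = hh k x"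
    by (rule IVT2') (use hh_1 hh_nonneg[of x k] hh_le_cc[OF k, of x] x c hh_cont in auto)
  then obtain y where y: "cc k \<le> y" "y \<le> 1" "hh k y = hh k x" by auto
  have "(THE y. cc k \<le> y \<and> y \<le> 1 \<and> hh k y = hh k x) = y"
    by (rule the_equality) (use y hh_inj_high[OF k] in auto)
  then show ?thesis using y x unfolding FF_def by simp
qed

lemma FF_high:
  assumes k: "k \<ge> 1" and x: "cc k < x" "x \<le> 1"
  shows "0 \<le> FF k x \<and> FF k x \<le> cc k \<and> hh k (FF k x) = hh k x"
proof -
  have c: "0 < cc k" "cc k < 1" using cc_bounds[OF k] by auto
  have "\<exists>y\<ge>0. y \<le> cc k \<and> hh k y = hh k x"
    by (rule IVT') (use hh_0[OF k] hh_nonneg[of x k] hh_le_cc[OF k, of x] x c hh_cont in auto)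
  then obtain y where y: "0 \<le> y" "y \<le> cc k" "hh k y = hh k x" by auto
  have "(THE y. 0 \<le> y \<and> y \<le> cc k \<and> hh k y = hh k x) = y"
    by (rule the_equality) (use y hh_inj_low[OF k] in auto)
  then show ?thesis using y x unfolding FF_def by simp
qed

lemma FF_props:
  assumes k: "k \<ge> 1" and x: "0 \<le> x" "x \<le> 1"
  shows "0 \<le> FF k x" "FF k x \<le> 1" "hh k (FF k x) = hh k x"
    "x \<le> cc k \<Longrightarrow> cc k \<le> FF k x" "cc k < x \<Longrightarrow> FF k x \<le> cc k"
  using FF_low[OF k, of x] FF_high[OF k, of x] x cc_bounds[OF k] by (cases "x \<le> cc k"; force)+

lemma FF_antimono:
  assumes k: "k \<ge> 1" and "0 \<le> x" "x \<le> y" "y \<le> 1"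
  shows "FF k y \<le> FF k x"
proof -
  note P = FF_props[OF k]
  have c: "0 < cc k" "cc k < 1" using cc_bounds[OF k] by auto
  consider "y \<le> cc k" | "x \<le> cc k" "cc k < y" | "cc k < x" using assms by linarith
  then show ?thesis
  proof cases
    case 1
    have "hh k x \<le> hh k y" using hh_inc[OF k, of x y] assms 1 by (cases "x = y") auto
    then have "hh k (FF k x) \<le> hh k (FF k y)" using P[of x] P[of y] assms by auto
    then show ?thesis using hh_dec[OF k, of "FF k x" "FF k y"] P[of x] P[of y] assms 1
      by (cases "FF k y \<le> FF k x") auto
  next
    case 2
    then show ?thesis using P[of x] P[of y] assms by force
  next
    case 3
    have "hh k y \<le> hh k x" using hh_dec[OF k, of x y] assms 3 by (cases "x = y") auto
    then have "hh k (FF k y) \<le> hh k (FF k x)" using P[of x] P[of y] assms by auto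
    then show ?thesis using hh_inc[OF k, of "FF k x" "FF k y"] P[of x] P[of y] assms 3
      by (cases "FF k y \<le> FF k x") auto
  qed
qed

lemma f_fun_eq:
  assumes k: "k \<ge> 1"
  shows "f_fun k = restrict (FF k) {0..1}"
  unfolding f_fun_def
proof (rule the_equality)
  note P = FF_props[OF k]
  have hheq: "hh k y = hh k x \<longleftrightarrow> y ^ k - y ^ (k + 1) = x ^ k - x ^ (k + 1)" for x y
    unfolding hh_def ..
  show "restrict (FF k) {0..1} \<in> {0..1} \<rightarrow>\<^sub>E {0..1} \<and> antimono_on {0..1} (restrict (FF k) {0..1}) \<and>
    (\<forall>x\<in>{0..1}. restrict (FF k) {0..1} x ^ k - restrict (FF k) {0..1} x ^ (k + 1) = x ^ k - x ^ (k + 1))"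
  proof (intro conjI)
    show "restrict (FF k) {0..1} \<in> {0..1} \<rightarrow>\<^sub>E {0..1}"
    proof (unfold restrict_PiE_iff, intro ballI)
      fix x :: real assume x: "x \<in> {0..1}"
      then have x1: "0 \<le> x" "x \<le> 1" by auto
      have "0 \<le> FF k x" "FF k x \<le> 1" using P(1)[OF x1] P(2)[OF x1] by -
      then show "FF k x \<in> {0..1}" by simp
    qed
    show "antimono_on {0..1} (restrict (FF k) {0..1})"
    proof (rule monotone_onI)
      fix x y :: real assume "x \<in> {0..1}" "y \<in> {0..1}" "x \<le> y"
      then show "restrict (FF k) {0..1} y \<le> restrict (FF k) {0..1} x"
        using FF_antimono[OF k, of x y] by simp
    qed
    show "\<forall>x\<in>{0..1}. restrict (FF k) {0..1} x ^ k - restrict (FF k) {0..1} x ^ (k + 1) = x ^ k - x ^ (k + 1)"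
    proof
      fix x :: real assume "x \<in> {0..1}"
      then have "hh k (FF k x) = hh k x" using P(3)[of x] by simp
      then show "restrict (FF k) {0..1} x ^ k - restrict (FF k) {0..1} x ^ (k + 1) = x ^ k - x ^ (k + 1)"
        using \<open>x \<in> {0..1}\<close> unfolding hh_def by simp
    qed
  qed
next
  fix f :: "real \<Rightarrow> real"
  assume A: "f \<in> {0..1} \<rightarrow>\<^sub>E {0..1} \<and> antimono_on {0..1} f \<and>
       (\<forall>x\<in>{0..1}. f x ^ k - f x ^ (k + 1) = x ^ k - x ^ (k + 1))"
  note P = FF_props[OF k]
  have c: "0 < cc k" "cc k < 1" using cc_bounds[OF k] by auto
  have fr: "0 \<le> f x \<and> f x \<le> 1" if "0 \<le> x" "x \<le> 1" for x
  proof -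
    have "f \<in> {0..1} \<rightarrow>\<^sub>E {0..1}" using A by blast
    then show ?thesis using that by (auto simp: PiE_def Pi_def)
  qed
  have fh: "hh k (f x) = hh k x" if "0 \<le> x" "x \<le> 1" for x
  proof -
    have "\<forall>x\<in>{0..1}. f x ^ k - f x ^ (k + 1) = x ^ k - x ^ (k + 1)" using A by blast
    then show ?thesis using that unfolding hh_def by simp
  qed
  have fm: "f y \<le> f x" if "0 \<le> x" "x \<le> y" "y \<le> 1" for x y
  proof -
    have "antimono_on {0..1} f" using A by blast
    then show ?thesis using that unfolding monotone_on_def by simp
  qed
  have eq: "f x = FF k x" if x: "0 \<le> x" "x \<le> 1" for x
  proof (cases x "cc k" rule: linorder_cases)
    case less
    have "cc k \<le> f x"
    proof (rule ccontr)
      assume "\<not> cc k \<le> f x"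
      then have "f x = x" using hh_inj_low[OF k, of "f x" x] fr[OF x] fh[OF x] x less by auto
      define x' where "x' = (x + cc k) / 2"
      have x': "x < x'" "x' < cc k" using less unfolding x'_def by auto
      have x'1: "0 \<le> x'" "x' \<le> 1" using x x' c by auto
      have "f x' \<le> x" using fm[of x x'] x x'1 x' \<open>f x = x\<close> by auto
      moreover have "0 \<le> f x'" "hh k (f x') = hh k x'" using fr[OF x'1] fh[OF x'1] by auto
      ultimately have "f x' = x'" using hh_inj_low[OF k, of "f x'" x'] x x'1 x' by auto
      then show False using \<open>f x' \<le> x\<close> x' by auto
    qed
    then show ?thesis using hh_inj_high[OF k, of "f x" "FF k x"] fr[OF x] fh[OF x] P[OF x] less by auto
  next
    case greater
    have "f x \<le> cc k"
    proof (rule ccontr)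
      assume "\<not> f x \<le> cc k"
      then have "f x = x" using hh_inj_high[OF k, of "f x" x] fr[OF x] fh[OF x] x greater by auto
      define x' where "x' = (x + cc k) / 2"
      have x': "x' < x" "cc k < x'" using greater unfolding x'_def by auto
      have x'1: "0 \<le> x'" "x' \<le> 1" using x x' c by auto
      have "x \<le> f x'" using fm[of x' x] x x'1 x' \<open>f x = x\<close> by auto
      moreover have "f x' \<le> 1" "hh k (f x') = hh k x'" using fr[OF x'1] fh[OF x'1] by auto
      ultimately have "f x' = x'" using hh_inj_high[OF k, of "f x'" x'] x x'1 x' by auto
      then show False using \<open>x \<le> f x'\<close> x' by auto
    qed
    then show ?thesis using hh_inj_low[OF k, of "f x" "FF k x"] fr[OF x] fh[OF x] P[OF x] greater by auto
  next
    case equal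
    have fx: "0 \<le> f x" "f x \<le> 1" "hh k (f x) = hh k x" using fr[OF x] fh[OF x] by auto
    have "f x = x"
    proof (cases "f x \<le> cc k")
      case True
      show ?thesis by (rule hh_inj_low[OF k]) (use True fx x equal in auto)
    next
      case False
      show ?thesis by (rule hh_inj_high[OF k]) (use False fx x equal in auto)
    qed
    moreover have "FF k x = x"
      using hh_inj_high[OF k, of "FF k x" x] P[OF x] x equal by auto
    ultimately show ?thesis by simp
  qed
  show "f = restrict (FF k) {0..1}"
  proof
    fix x show "f x = restrict (FF k) {0..1} x"
    proof (cases "x \<in> {0..1}")
      case True then show ?thesis using eq by simp
    next
      case False
      have "f \<in> {0..1} \<rightarrow>\<^sub>E {0..1}" using A by blast
      then have "f x = undefined" using False by (simp add: PiE_def extensional_def)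
      moreover have "restrict (FF k) {0..1} x = undefined"
        unfolding restrict_def using if_not_P[OF False] by -
      ultimately show ?thesis by simp
    qed
  qed
qed

lemma f_fun_props:
  assumes k: "k \<ge> 1" and p: "0 < p" "p < 1"
  shows "0 < f_fun k p" "f_fun k p \<le> 1"
    "f_fun k p ^ k * (1 - f_fun k p) = p ^ k * (1 - p)"
    "f_fun k p = p \<Longrightarrow> p = cc k"
proof -
  have fe: "f_fun k p = FF k p" using f_fun_eq[OF k] p by simp
  note P = FF_props[OF k, of p]
  have e: "y ^ k * (1 - y) = hh k y" for y unfolding hh_def by (simp add: algebra_simps)
  show 3: "f_fun k p ^ k * (1 - f_fun k p) = p ^ k * (1 - p)" using P p fe e by simp
  show "f_fun k p \<le> 1" using P p fe by simp
  have "p ^ k * (1 - p) > 0" using p by simp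
  then have "f_fun k p \<noteq> 0" using 3 k by (cases k) auto
  then show "0 < f_fun k p" using P p fe by simp
  show "f_fun k p = p \<Longrightarrow> p = cc k" using P p fe by (cases "p \<le> cc k") auto
qed

definition NR :: "nat \<Rightarrow> (int \<Rightarrow> 'w \<Rightarrow> bool) \<Rightarrow> int set \<Rightarrow> 'w set" where
  "NR k X I = {\<omega>. \<not> (\<exists>c. {c .. c + int k - 1} \<subseteq> I \<and> (\<forall>x\<in>{c .. c + int k - 1}. X x \<omega>))}"

definition depc :: "(int \<Rightarrow> 'w \<Rightarrow> bool) \<Rightarrow> int set \<Rightarrow> 'w set \<Rightarrow> bool" where
  "depc X I E \<longleftrightarrow> (\<forall>\<omega> \<omega>'. (\<forall>x\<in>I. X x \<omega> = X x \<omega>') \<longrightarrow> (\<omega> \<in> E \<longleftrightarrow> \<omega>' \<in> E))"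

lemma NR_anti: "J \<subseteq> I \<Longrightarrow> NR k X I \<subseteq> NR k X J"
  unfolding NR_def by blast

lemma depc_NR: "J \<subseteq> I \<Longrightarrow> depc X I (NR k X J)"
  unfolding depc_def NR_def by (safe; metis subset_iff)+

lemma depc_all: "J \<subseteq> I \<Longrightarrow> depc X I {\<omega>. \<forall>x\<in>J. X x \<omega>}"
  unfolding depc_def by blast

lemma depc_not: "x \<in> I \<Longrightarrow> depc X I {\<omega>. \<not> X x \<omega>}"
  unfolding depc_def by blast

lemma depc_Int: "depc X I E1 \<Longrightarrow> depc X I E2 \<Longrightarrow> depc X I (E1 \<inter> E2)"
  unfolding depc_def by blast

lemma powr_ge1: "0 < (fv::real) \<Longrightarrow> fv \<le> 1 \<Longrightarrow> e \<le> 0 \<Longrightarrow> 1 \<le> fv powr e"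
  using powr_mono'[of e 0 fv] by simp

lemma one_d:
  fixes \<mu> :: "'w pmf" and X :: "int \<Rightarrow> 'w \<Rightarrow> bool" and pp :: "int \<Rightarrow> real"
  assumes k1: "k \<ge> 1" and fv: "0 < fv" "fv \<le> 1"
    and key: "(\<Sum>i<k. p ^ i * (1 - p) / fv ^ (i + 1)) \<le> 1"
    and pp: "\<And>x. pp x = 0 \<or> pp x = p"
    and indep: "\<And>I1 I2 E1 E2. I1 \<inter> I2 = {} \<Longrightarrow> depc X I1 E1 \<Longrightarrow> depc X I2 E2 \<Longrightarrow>
        measure_pmf.prob \<mu> (E1 \<inter> E2) = measure_pmf.prob \<mu> E1 * measure_pmf.prob \<mu> E2"
    and allp: "\<And>I. finite I \<Longrightarrow> measure_pmf.prob \<mu> {\<omega>. \<forall>x\<in>I. X x \<omega>} = (\<Prod>x\<in>I. pp x)"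
  shows "measure_pmf.prob \<mu> (NR k X {lo..<lo + int n})
     \<le> fv powr (real n - (real k - 1) - real k * real (card {x\<in>{lo..<lo + int n}. pp x = 0}))"
proof (induction n arbitrary: lo rule: less_induct)
  case (less n)
  define I where "I = {lo..<lo + int n}"
  define r where "r = card {x\<in>I. pp x = 0}"
  have "measure_pmf.prob \<mu> (NR k X I) \<le> fv powr (real n - (real k - 1) - real k * real r)"
  proof (cases "\<exists>x\<in>I. pp x = 0")
    case True
    then obtain x where x: "x \<in> I" "pp x = 0" by blast
    define n1 where "n1 = nat (x - lo)"
    define n2 where "n2 = n - n1 - 1"
    have xlo: "lo \<le> x" "x < lo + int n" using x unfolding I_def by auto
    have n12: "n = n1 + n2 + 1" "x = lo + int n1" using xlo unfolding n1_def n2_def by auto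
    define L where "L = {lo..<lo + int n1}"
    define R where "R = {(x+1)..<(x+1) + int n2}"
    have LR: "L \<subseteq> I" "R \<subseteq> I" "L \<inter> R = {}" "x \<notin> L" "x \<notin> R"
      unfolding L_def R_def I_def using n12 by auto
    have Ieq: "I = L \<union> R \<union> {x}" unfolding L_def R_def I_def using n12 by auto
    have "{y\<in>I. pp y = 0} = {y\<in>L. pp y = 0} \<union> {y\<in>R. pp y = 0} \<union> {x}"
      using Ieq x by auto
    moreover have "finite L" "finite R" unfolding L_def R_def by auto
    moreover have "card ({y\<in>L. pp y = 0} \<union> {y\<in>R. pp y = 0}) = card {y\<in>L. pp y = 0} + card {y\<in>R. pp y = 0}"
      by (rule card_Un_disjoint) (use LR \<open>finite L\<close> \<open>finite R\<close> in auto)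
    moreover have "card (({y\<in>L. pp y = 0} \<union> {y\<in>R. pp y = 0}) \<union> {x}) = card ({y\<in>L. pp y = 0} \<union> {y\<in>R. pp y = 0}) + card {x}"
      by (rule card_Un_disjoint) (use LR \<open>finite L\<close> \<open>finite R\<close> in auto)
    ultimately have rr: "r = card {y\<in>L. pp y = 0} + card {y\<in>R. pp y = 0} + 1"
      unfolding r_def by simp
    have "measure_pmf.prob \<mu> (NR k X I) \<le> measure_pmf.prob \<mu> (NR k X L \<inter> NR k X R)"
      using NR_anti[OF LR(1), of k X] NR_anti[OF LR(2), of k X]
      by (intro measure_pmf.finite_measure_mono) auto
    also have "\<dots> = measure_pmf.prob \<mu> (NR k X L) * measure_pmf.prob \<mu> (NR k X R)"
      by (rule indep[OF LR(3)]) (auto intro: depc_NR)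
    also have "\<dots> \<le> fv powr (real n1 - (real k - 1) - real k * real (card {y\<in>L. pp y = 0}))
                  * fv powr (real n2 - (real k - 1) - real k * real (card {y\<in>R. pp y = 0}))"
      unfolding L_def R_def using n12
      by (intro mult_mono less.IH) auto
    also have "\<dots> = fv powr (real n - (real k - 1) - real k * real r)"
      unfolding powr_add[symmetric] rr using n12 by (simp add: algebra_simps)
    finally show ?thesis .
  next
    case False
    note noF = False
    then have "{x\<in>I. pp x = 0} = {}" by auto
    then have r0: "r = 0" unfolding r_def by (metis card.empty)
    have ppI: "pp y = p" if "y \<in> I" for y using False pp that by blast
    show ?thesis
    proof (cases "n < k")
      case True
      have "measure_pmf.prob \<mu> (NR k X I) \<le> 1" by simp
      also have "1 \<le> fv powr (real n - (real k - 1) - real k * real r)"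
        using True fv r0 by (intro powr_ge1) auto
      finally show ?thesis .
    next
      case False
      define A where "A i = {\<omega>. \<forall>y\<in>{lo..<lo + int i}. X y \<omega>}" for i :: nat
      define B where "B i = {\<omega>. \<not> X (lo + int i) \<omega>}" for i :: nat
      define RI where "RI i = {lo + int i + 1..<(lo + int i + 1) + int (n - i - 1)}" for i :: nat
      have RIsub: "RI i \<subseteq> I" if "i < k" for i unfolding RI_def I_def using that False by auto
      have sub: "NR k X I \<subseteq> (\<Union>i\<in>{..<k}. A i \<inter> B i \<inter> NR k X (RI i))"
      proof
        fix \<omega> assume w: "\<omega> \<in> NR k X I"
        have "\<exists>i<k. \<not> X (lo + int i) \<omega>"
        proof (rule ccontr)
          assume "\<not> (\<exists>i<k. \<not> X (lo + int i) \<omega>)"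
          note H = this
          have allX: "\<forall>y\<in>{lo .. lo + int k - 1}. X y \<omega>"
          proof
            fix y assume y: "y \<in> {lo .. lo + int k - 1}"
            have "nat (y - lo) < k" "y = lo + int (nat (y - lo))" using y by auto
            then show "X y \<omega>" using H by metis
          qed
          have "{lo .. lo + int k - 1} \<subseteq> I" unfolding I_def using False by auto
          then show False using w allX unfolding NR_def by blast
        qed
        then obtain i0 where i0: "i0 < k" "\<not> X (lo + int i0) \<omega>" by blast
        define i where "i = (LEAST i. \<not> X (lo + int i) \<omega>)"
        have i2: "\<not> X (lo + int i) \<omega>" unfolding i_def by (rule LeastI[of _ i0]) (rule i0(2))
        have "i \<le> i0" unfolding i_def by (rule Least_le) (rule i0(2))
        have i3: "\<forall>j<i. X (lo + int j) \<omega>" using not_less_Least unfolding i_def by blast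
        have i: "i < k" "\<not> X (lo + int i) \<omega>" "\<forall>j<i. X (lo + int j) \<omega>"
          using \<open>i \<le> i0\<close> i0 i2 i3 by auto
        have "\<omega> \<in> A i"
        proof -
          have "X y \<omega>" if "y \<in> {lo..<lo + int i}" for y
            using i(3)[rule_format, of "nat (y - lo)"] that by auto
          then show ?thesis unfolding A_def by blast
        qed
        moreover have "\<omega> \<in> B i" using i unfolding B_def by simp
        moreover have "\<omega> \<in> NR k X (RI i)" using NR_anti[OF RIsub[OF i(1)], of k X] w by blast
        ultimately show "\<omega> \<in> (\<Union>i\<in>{..<k}. A i \<inter> B i \<inter> NR k X (RI i))" using i(1) by blast
      qed
      have probE: "measure_pmf.prob \<mu> (A i \<inter> B i \<inter> NR k X (RI i))
                    \<le> p ^ i * (1 - p) * fv powr (real (n - i - 1) - (real k - 1))" if i: "i < k" for i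
      proof -
        have "measure_pmf.prob \<mu> ((A i \<inter> B i) \<inter> NR k X (RI i))
              = measure_pmf.prob \<mu> (A i \<inter> B i) * measure_pmf.prob \<mu> (NR k X (RI i))"
          by (rule indep[of "{lo..<lo + int i + 1}" "RI i"])
            (auto simp: RI_def A_def B_def intro!: depc_Int depc_all depc_not depc_NR)
        also have "measure_pmf.prob \<mu> (A i \<inter> B i) = measure_pmf.prob \<mu> (A i) * measure_pmf.prob \<mu> (B i)"
          by (rule indep[of "{lo..<lo + int i}" "{lo + int i}"])
            (auto simp: A_def B_def intro!: depc_all depc_not)
        also have "measure_pmf.prob \<mu> (A i) = p ^ i"
        proof -
          have "measure_pmf.prob \<mu> (A i) = (\<Prod>y\<in>{lo..<lo + int i}. pp y)"
            unfolding A_def by (rule allp) simp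
          also have "\<dots> = (\<Prod>y\<in>{lo..<lo + int i}. p)"
            using ppI i False unfolding I_def by (intro prod.cong) auto
          finally show ?thesis by simp
        qed
        also have "measure_pmf.prob \<mu> (B i) = 1 - p"
        proof -
          have "B i = UNIV - {\<omega>. \<forall>y\<in>{lo + int i}. X y \<omega>}" unfolding B_def by auto
          then have "measure_pmf.prob \<mu> (B i) = 1 - measure_pmf.prob \<mu> {\<omega>. \<forall>y\<in>{lo + int i}. X y \<omega>}"
            using measure_pmf.prob_compl[of "{\<omega>. \<forall>y\<in>{lo + int i}. X y \<omega>}" \<mu>] by simp
          also have "\<dots> = 1 - pp (lo + int i)" using allp[of "{lo + int i}"] by simp
          also have "pp (lo + int i) = p" using ppI i False unfolding I_def by auto
          finally show ?thesis .
        qed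
        also have "measure_pmf.prob \<mu> (NR k X (RI i)) \<le> fv powr (real (n - i - 1) - (real k - 1))"
        proof -
          have "{x\<in>RI i. pp x = 0} = {}" using RIsub[OF i] noF by auto
          then have e: "card {x\<in>RI i. pp x = 0} = 0" by (metis card.empty)
          have "n - i - 1 < n" using i False by auto
          have "measure_pmf.prob \<mu> (NR k X (RI i)) \<le> fv powr (real (n - i - 1) - (real k - 1) - real k * real (card {x\<in>RI i. pp x = 0}))"
            using less.IH[OF \<open>n - i - 1 < n\<close>, of "lo + int i + 1"] unfolding RI_def .
          then show ?thesis unfolding e by simp
        qed
        moreover have "0 \<le> p ^ i * (1 - p)"
        proof -
          have "0 \<le> measure_pmf.prob \<mu> (A i) * measure_pmf.prob \<mu> (B i)" by simp
          then show ?thesis using \<open>measure_pmf.prob \<mu> (A i) = p ^ i\<close> \<open>measure_pmf.prob \<mu> (B i) = 1 - p\<close>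
            by simp
        qed
        ultimately show ?thesis by (simp add: mult_left_mono)
      qed
      have "measure_pmf.prob \<mu> (NR k X I) \<le> measure_pmf.prob \<mu> (\<Union>i\<in>{..<k}. A i \<inter> B i \<inter> NR k X (RI i))"
        using sub by (intro measure_pmf.finite_measure_mono) auto
      also have "\<dots> \<le> (\<Sum>i<k. measure_pmf.prob \<mu> (A i \<inter> B i \<inter> NR k X (RI i)))"
        by (intro measure_pmf.finite_measure_subadditive_finite) auto
      also have "\<dots> \<le> (\<Sum>i<k. p ^ i * (1 - p) * fv powr (real (n - i - 1) - (real k - 1)))"
        by (intro sum_mono probE) auto
      also have "\<dots> = (\<Sum>i<k. p ^ i * (1 - p) / fv ^ (i + 1)) * fv powr (real n - (real k - 1))"
        unfolding sum_distrib_right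
      proof (intro sum.cong refl)
        fix i assume "i \<in> {..<k}"
        then have "real (n - i - 1) - (real k - 1) = (real n - (real k - 1)) - real (i + 1)"
          using False by auto
        then have "fv powr (real (n - i - 1) - (real k - 1)) = fv powr ((real n - (real k - 1)) - real (i + 1))"
          by (simp only:)
        also have "\<dots> = fv powr (real n - (real k - 1)) / fv powr real (i + 1)" by (rule powr_diff)
        also have "\<dots> = fv powr (real n - (real k - 1)) / fv ^ (i + 1)" using fv by (simp only: powr_realpow)
        finally have "fv powr (real (n - i - 1) - (real k - 1)) = fv powr (real n - (real k - 1)) / fv ^ (i + 1)" .
        then show "p ^ i * (1 - p) * fv powr (real (n - i - 1) - (real k - 1)) =
              p ^ i * (1 - p) / fv ^ (i + 1) * fv powr (real n - (real k - 1))" by simp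
      qed
      also have "\<dots> \<le> 1 * fv powr (real n - (real k - 1))"
        using key by (intro mult_right_mono) auto
      finally show ?thesis using r0 by simp
    qed
  qed
  then show ?case unfolding I_def r_def .
qed

lemma key_ineq:
  assumes k: "k \<ge> 1" and p: "0 < p" "p < 1"
  shows "(\<Sum>i<k. p ^ i * (1 - p) / f_fun k p ^ (i + 1)) \<le> 1"
proof -
  define fv where "fv = f_fun k p"
  note F = f_fun_props[OF k p, folded fv_def]
  define S where "S = (\<Sum>i<k. fv ^ (k - Suc i) * p ^ i)"
  have d: "p ^ k - fv ^ k = (p - fv) * S" unfolding S_def by (rule power_diff_sumr2)
  have e1: "(1 - p) * (fv ^ k - p ^ k) = fv ^ k * (fv - p)"
    using F(3) by (simp add: algebra_simps)
  have d': "(fv - p) * S = fv ^ k - p ^ k" using d by (simp add: algebra_simps)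
  have "(fv - p) * ((1 - p) * S - fv ^ k) = (1 - p) * ((fv - p) * S) - (fv - p) * fv ^ k"
    by (simp add: algebra_simps)
  also have "\<dots> = (1 - p) * (fv ^ k - p ^ k) - (fv - p) * fv ^ k" using d' by simp
  also have "\<dots> = 0" using e1 by (simp add: algebra_simps)
  finally have "(fv - p) * ((1 - p) * S - fv ^ k) = 0" .
  then have S1: "(1 - p) * S = fv ^ k"
  proof (cases "fv = p")
    case True
    then have pc: "p = cc k" using F(4) by simp
    have "S = (\<Sum>i<k. p ^ (k - 1))"
      unfolding S_def True by (intro sum.cong refl) (auto simp: power_add[symmetric])
    then have "S = real k * p ^ (k - 1)" by simp
    moreover have "(1 - p) * real k = p" using pc unfolding cc_def by (simp add: field_simps)
    ultimately have "(1 - p) * S = ((1 - p) * real k) * p ^ (k - 1)" by (simp add: algebra_simps)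
    also have "\<dots> = p * p ^ (k - 1)" using \<open>(1 - p) * real k = p\<close> by simp
    finally have "(1 - p) * S = p * p ^ (k - 1)" .
    also have "\<dots> = p ^ k" using k by (cases k) auto
    finally show ?thesis using True by simp
  qed simp
  have "(\<Sum>i<k. p ^ i * (1 - p) / fv ^ (i + 1)) = (\<Sum>i<k. (1 - p) * (fv ^ (k - Suc i) * p ^ i) / fv ^ k)"
  proof (intro sum.cong refl)
    fix i assume "i \<in> {..<k}"
    then have "k = (i + 1) + (k - Suc i)" by simp
    then have "fv ^ k = fv ^ ((i + 1) + (k - Suc i))" by (simp only:)
    then have "fv ^ k = fv ^ (i + 1) * fv ^ (k - Suc i)" by (simp only: power_add)
    then show "p ^ i * (1 - p) / fv ^ (i + 1) = (1 - p) * (fv ^ (k - Suc i) * p ^ i) / fv ^ k"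
      using F(1) by (simp add: field_simps)
  qed
  also have "\<dots> = (1 - p) * S / fv ^ k" unfolding S_def by (simp add: sum_divide_distrib sum_distrib_left)
  also have "\<dots> = 1" using S1 F(1) by simp
  finally show ?thesis unfolding fv_def by simp
qed

definition deps :: "'a set \<Rightarrow> ('a \<Rightarrow> 'b) set \<Rightarrow> bool" where
  "deps A E \<longleftrightarrow> (\<forall>\<omega> \<omega>'. (\<forall>z\<in>A. \<omega> z = \<omega>' z) \<longrightarrow> (\<omega> \<in> E \<longleftrightarrow> \<omega>' \<in> E))"

lemma Pi_indep_aux:
  fixes A A1 A2 :: "'a set" and P :: "'a \<Rightarrow> 'b pmf"
  assumes fin: "finite A" and disj: "A1 \<inter> A2 = {}" and d1: "deps A1 E1" and d2: "deps A2 E2"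
  shows "measure_pmf.prob (Pi_pmf A dflt P) (E1 \<inter> E2) =
         measure_pmf.prob (Pi_pmf (A \<inter> A1) dflt P) E1 * measure_pmf.prob (Pi_pmf (A - A1) dflt P) E2"
proof -
  define B1 where "B1 = A \<inter> A1"
  define B2 where "B2 = A - A1"
  define mg where "mg = (\<lambda>(f, g) x. if x \<in> B1 then f x else (g x :: 'b))"
  define Q where "Q = pair_pmf (Pi_pmf B1 dflt P) (Pi_pmf B2 dflt P)"
  have fins: "finite B1" "finite B2" using fin unfolding B1_def B2_def by auto
  have AB: "A = B1 \<union> B2" "B1 \<inter> B2 = {}" unfolding B1_def B2_def by auto
  have M: "Pi_pmf A dflt P = map_pmf mg Q"
    unfolding Q_def mg_def AB(1) by (rule Pi_pmf_union[OF fins AB(2)])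
  define S1 where "S1 = set_pmf (Pi_pmf B1 dflt P)"
  define S2 where "S2 = set_pmf (Pi_pmf B2 dflt P)"
  have S1d: "f x = dflt" if "f \<in> S1" "x \<notin> B1" for f x
    using set_Pi_pmf_subset[OF fins(1), of dflt P] that unfolding S1_def by blast
  have S2d: "g x = dflt" if "g \<in> S2" "x \<notin> B2" for g x
    using set_Pi_pmf_subset[OF fins(2), of dflt P] that unfolding S2_def by blast
  have agree1: "mg (f, g) z = f z" if "f \<in> S1" "g \<in> S2" "z \<in> A1" for f g z
  proof (cases "z \<in> B1")
    case True then show ?thesis unfolding mg_def by simp
  next
    case False
    then have "z \<notin> B2" "z \<notin> B1" using that(3) unfolding B1_def B2_def by auto
    then show ?thesis using S1d[OF that(1)] S2d[OF that(2)] unfolding mg_def by simp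
  qed
  have agree2: "mg (f, g) z = g z" if "z \<in> A2" for f g z
  proof -
    have "z \<notin> B1" using that disj unfolding B1_def by auto
    then show ?thesis unfolding mg_def by simp
  qed
  have "measure_pmf.prob (Pi_pmf A dflt P) (E1 \<inter> E2) = measure_pmf.prob Q (mg -` (E1 \<inter> E2))"
    unfolding M by simp
  also have "\<dots> = measure_pmf.prob Q (mg -` (E1 \<inter> E2) \<inter> set_pmf Q)"
    by (rule measure_Int_set_pmf[symmetric])
  also have "mg -` (E1 \<inter> E2) \<inter> set_pmf Q = (E1 \<inter> S1) \<times> (E2 \<inter> S2)"
  proof (intro set_eqI iffI)
    fix fg assume fg: "fg \<in> mg -` (E1 \<inter> E2) \<inter> set_pmf Q"
    obtain f g where fg': "fg = (f, g)" by (cases fg)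
    have fS: "f \<in> S1" "g \<in> S2" using fg fg' unfolding Q_def S1_def S2_def by auto
    have "mg (f, g) \<in> E1" "mg (f, g) \<in> E2" using fg fg' by auto
    moreover have "mg (f, g) \<in> E1 \<longleftrightarrow> f \<in> E1"
      using d1 agree1[OF fS] unfolding deps_def by blast
    moreover have "mg (f, g) \<in> E2 \<longleftrightarrow> g \<in> E2"
      using d2 agree2 unfolding deps_def by blast
    ultimately show "fg \<in> (E1 \<inter> S1) \<times> (E2 \<inter> S2)" using fS fg' by auto
  next
    fix fg assume fg: "fg \<in> (E1 \<inter> S1) \<times> (E2 \<inter> S2)"
    obtain f g where fg': "fg = (f, g)" by (cases fg)
    have fS: "f \<in> S1" "g \<in> S2" using fg fg' by auto
    have "mg (f, g) \<in> E1 \<longleftrightarrow> f \<in> E1"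
      using d1 agree1[OF fS] unfolding deps_def by blast
    moreover have "mg (f, g) \<in> E2 \<longleftrightarrow> g \<in> E2"
      using d2 agree2 unfolding deps_def by blast
    ultimately show "fg \<in> mg -` (E1 \<inter> E2) \<inter> set_pmf Q"
      using fS fg fg' unfolding Q_def S1_def S2_def by auto
  qed
  also have "measure_pmf.prob Q ((E1 \<inter> S1) \<times> (E2 \<inter> S2)) =
      measure_pmf.prob (Pi_pmf B1 dflt P) (E1 \<inter> S1) * measure_pmf.prob (Pi_pmf B2 dflt P) (E2 \<inter> S2)"
    unfolding Q_def by (rule measure_pmf_prob_product) (auto simp: S1_def S2_def intro: countable_subset)
  also have "\<dots> = measure_pmf.prob (Pi_pmf B1 dflt P) E1 * measure_pmf.prob (Pi_pmf B2 dflt P) E2"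
    unfolding S1_def S2_def by (simp add: measure_Int_set_pmf)
  finally show ?thesis unfolding B1_def B2_def .
qed

lemma deps_UNIV: "deps A UNIV" unfolding deps_def by auto

lemma Pi_indep:
  fixes A A1 A2 :: "'a set" and P :: "'a \<Rightarrow> 'b pmf"
  assumes fin: "finite A" and disj: "A1 \<inter> A2 = {}" and d1: "deps A1 E1" and d2: "deps A2 E2"
  shows "measure_pmf.prob (Pi_pmf A dflt P) (E1 \<inter> E2) =
         measure_pmf.prob (Pi_pmf A dflt P) E1 * measure_pmf.prob (Pi_pmf A dflt P) E2"
proof -
  have a: "measure_pmf.prob (Pi_pmf A dflt P) (E1 \<inter> UNIV) = measure_pmf.prob (Pi_pmf (A \<inter> A1) dflt P) E1"
    using Pi_indep_aux[OF fin disj d1 deps_UNIV, of dflt P] by simp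
  have b: "measure_pmf.prob (Pi_pmf A dflt P) (UNIV \<inter> E2) = measure_pmf.prob (Pi_pmf (A - A1) dflt P) E2"
    using Pi_indep_aux[OF fin disj deps_UNIV d2, of dflt P] by simp
  show ?thesis using Pi_indep_aux[OF fin disj d1 d2, of dflt P] a b by simp
qed

lemma one_d_cc:
  fixes \<mu> :: "'w pmf" and X :: "int \<Rightarrow> 'w \<Rightarrow> bool" and pp :: "int \<Rightarrow> real"
  assumes k1: "k \<ge> 1" and fv: "0 < fv" "fv \<le> 1"
    and key: "(\<Sum>i<k. p ^ i * (1 - p) / fv ^ (i + 1)) \<le> 1"
    and pp: "\<And>x. pp x = 0 \<or> pp x = p"
    and indep: "\<And>I1 I2 E1 E2. I1 \<inter> I2 = {} \<Longrightarrow> depc X I1 E1 \<Longrightarrow> depc X I2 E2 \<Longrightarrow>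
        measure_pmf.prob \<mu> (E1 \<inter> E2) = measure_pmf.prob \<mu> E1 * measure_pmf.prob \<mu> E2"
    and allp: "\<And>I. finite I \<Longrightarrow> measure_pmf.prob \<mu> {\<omega>. \<forall>x\<in>I. X x \<omega>} = (\<Prod>x\<in>I. pp x)"
    and lohi: "lo \<le> hi + 1"
  shows "measure_pmf.prob \<mu> (NR k X {lo..hi})
     \<le> fv powr (real (card {lo..hi}) - (real k - 1) - real k * real (card {x\<in>{lo..hi}. pp x = 0}))"
proof -
  define n where "n = nat (hi + 1 - lo)"
  have e: "{lo..hi} = {lo..<lo + int n}" unfolding n_def using lohi by auto
  have c: "card {lo..hi} = n" unfolding e by simp
  show ?thesis unfolding c unfolding e
    by (rule one_d[OF k1 fv key pp indep allp])
qed

lemma prob_Pi_bern: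
  fixes A :: "'a set" and B :: "'a \<Rightarrow> bool set"
  assumes "finite A"
  shows "measure_pmf.prob (Pi_pmf A False (\<lambda>_. bernoulli_pmf q)) {\<omega>. \<forall>z\<in>A. \<omega> z \<in> B z}
       = (\<Prod>z\<in>A. measure_pmf.prob (bernoulli_pmf q) (B z))"
proof -
  have "{\<omega>. \<forall>z\<in>A. \<omega> z \<in> B z} = Pi A B" by (auto simp: Pi_def)
  then show ?thesis using measure_Pi_pmf_Pi[OF assms, of False "\<lambda>_. bernoulli_pmf q" B] by simp
qed

lemma prob_all_true:
  fixes A Z :: "'a set"
  assumes fin: "finite A" and sub: "Z \<subseteq> A" and q: "0 \<le> q" "q \<le> 1"
  shows "measure_pmf.prob (Pi_pmf A False (\<lambda>_. bernoulli_pmf q)) {\<omega>. \<forall>z\<in>Z. \<omega> z} = q ^ card Z"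
proof -
  define B where "B z = (if z \<in> Z then {True} else UNIV)" for z
  have "{\<omega>. \<forall>z\<in>Z. \<omega> z} = {\<omega>. \<forall>z\<in>A. \<omega> z \<in> B z}" using sub unfolding B_def by auto
  then have "measure_pmf.prob (Pi_pmf A False (\<lambda>_. bernoulli_pmf q)) {\<omega>. \<forall>z\<in>Z. \<omega> z}
      = (\<Prod>z\<in>A. measure_pmf.prob (bernoulli_pmf q) (B z))" using prob_Pi_bern[OF fin] by simp
  also have "\<dots> = (\<Prod>z\<in>A. if z \<in> Z then q else 1)"
    using q by (intro prod.cong refl) (auto simp: B_def measure_pmf_single)
  also have "\<dots> = (\<Prod>z\<in>Z. q)"
    using fin sub by (simp add: prod.If_cases Int_absorb1 Int_absorb2 Collect_mem_eq)
  finally show ?thesis by simp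
qed

lemma prob_config:
  fixes A K T :: "'a set"
  assumes fin: "finite A" and sub: "K \<subseteq> A" "T \<subseteq> K" and q: "0 \<le> q" "q \<le> 1"
  shows "measure_pmf.prob (Pi_pmf A False (\<lambda>_. bernoulli_pmf q)) {\<omega>. {z\<in>K. \<not> \<omega> z} = T}
       = (\<Prod>z\<in>T. 1 - q) * (\<Prod>z\<in>K - T. q)"
proof -
  define B where "B z = (if z \<in> T then {False} else if z \<in> K then {True} else UNIV)" for z
  have "{\<omega>. {z\<in>K. \<not> \<omega> z} = T} = {\<omega>. \<forall>z\<in>A. \<omega> z \<in> B z}" using sub unfolding B_def by auto
  then have "measure_pmf.prob (Pi_pmf A False (\<lambda>_. bernoulli_pmf q)) {\<omega>. {z\<in>K. \<not> \<omega> z} = T}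
      = (\<Prod>z\<in>A. measure_pmf.prob (bernoulli_pmf q) (B z))" using prob_Pi_bern[OF fin] by simp
  also have "\<dots> = (\<Prod>z\<in>A. if z \<in> T then 1 - q else if z \<in> K then q else 1)"
    using q by (intro prod.cong refl) (auto simp: B_def measure_pmf_single)
  also have "\<dots> = (\<Prod>z\<in>T. 1 - q) * (\<Prod>z\<in>K - T. q)"
  proof -
    have fT: "finite T" "finite (K - T)" using fin sub by (auto intro: finite_subset)
    have "(\<Prod>z\<in>A. if z \<in> T then 1 - q else if z \<in> K then q else 1)
        = (\<Prod>z\<in>A. if z \<in> T then 1 - q else 1) * (\<Prod>z\<in>A. if z \<in> K - T then q else 1)"
      by (subst prod.distrib[symmetric]) (intro prod.cong refl, auto)
    also have "(\<Prod>z\<in>A. if z \<in> T then 1 - q else 1) = (\<Prod>z\<in>T. 1 - q)"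
      using fin sub by (subst prod.If_cases) (auto simp: Int_absorb1 Collect_mem_eq)
    also have "(\<Prod>z\<in>A. if z \<in> K - T then q else 1) = (\<Prod>z\<in>K - T. q)"
    proof -
      have "A \<inter> {z. z \<in> K - T} = K - T" using sub by auto
      then show ?thesis using fin by (subst prod.If_cases) auto
    qed
    finally show ?thesis .
  qed
  finally show ?thesis .
qed

definition lineX :: "(int \<Rightarrow> int \<Rightarrow> int \<times> int) \<Rightarrow> int set \<Rightarrow> int set \<Rightarrow> int set \<Rightarrow> (int \<times> int) set
    \<Rightarrow> int \<Rightarrow> (int \<times> int \<Rightarrow> bool) \<Rightarrow> bool" where
  "lineX pos Cl Om Os T u \<omega> \<longleftrightarrow> u \<in> Cl \<and> (\<forall>v\<in>Os. pos u v \<notin> T) \<and> (\<forall>v\<in>Om. \<omega> (pos u v))"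

lemma lineX_deps: "deps (case_prod pos ` (Cl \<times> Om)) (NR k (lineX pos Cl Om Os T) J)"
proof (unfold deps_def, intro allI impI)
  fix \<omega> \<omega>' :: "int \<times> int \<Rightarrow> bool"
  assume h: "\<forall>z\<in>case_prod pos ` (Cl \<times> Om). \<omega> z = \<omega>' z"
  have "lineX pos Cl Om Os T u \<omega> = lineX pos Cl Om Os T u \<omega>'" for u
    using h unfolding lineX_def by auto
  then show "\<omega> \<in> NR k (lineX pos Cl Om Os T) J \<longleftrightarrow> \<omega>' \<in> NR k (lineX pos Cl Om Os T) J"
    unfolding NR_def by simp
qed

lemma lineX_deps2: "deps (case_prod pos ` (J \<times> Om)) (NR k (lineX pos Cl Om Os T) J)"
proof (unfold deps_def, intro allI impI)
  fix \<omega> \<omega>' :: "int \<times> int \<Rightarrow> bool"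
  assume h: "\<forall>z\<in>case_prod pos ` (J \<times> Om). \<omega> z = \<omega>' z"
  have e: "lineX pos Cl Om Os T u \<omega> = lineX pos Cl Om Os T u \<omega>'" if "u \<in> J" for u
    using h that unfolding lineX_def by auto
  have "(\<exists>c. {c..c + int k - 1} \<subseteq> J \<and> (\<forall>x\<in>{c..c + int k - 1}. lineX pos Cl Om Os T x \<omega>)) \<longleftrightarrow>
        (\<exists>c. {c..c + int k - 1} \<subseteq> J \<and> (\<forall>x\<in>{c..c + int k - 1}. lineX pos Cl Om Os T x \<omega>'))"
    using e by blast
  then show "\<omega> \<in> NR k (lineX pos Cl Om Os T) J \<longleftrightarrow> \<omega>' \<in> NR k (lineX pos Cl Om Os T) J"
    unfolding NR_def mem_Collect_eq by (simp only:)
qed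

lemma deps_mono: "deps A E \<Longrightarrow> A \<subseteq> B \<Longrightarrow> deps B E"
  unfolding deps_def by blast

lemma deps_Int: "deps A E1 \<Longrightarrow> deps A E2 \<Longrightarrow> deps A (E1 \<inter> E2)"
  unfolding deps_def by blast

lemma line_bound:
  fixes pos :: "int \<Rightarrow> int \<Rightarrow> int \<times> int" and A :: "(int \<times> int) set"
  assumes inj: "\<And>u v u' v'. pos u v = pos u' v' \<Longrightarrow> u = u' \<and> v = v'"
    and finA: "finite A" and q: "0 < q" "q < 1" and k: "k \<ge> 1"
    and finOm: "finite Om" and Om1: "card Om \<ge> 1" and sub: "case_prod pos ` (Cl \<times> Om) \<subseteq> A"
    and lohi: "lo \<le> hi + 1"
  shows "measure_pmf.prob (Pi_pmf A False (\<lambda>_. bernoulli_pmf q)) (NR k (lineX pos Cl Om Os T) {lo..hi})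
     \<le> f_fun k (q ^ card Om) powr (real (card {lo..hi}) - (real k - 1)
          - real k * real (card {u\<in>{lo..hi}. \<not> (u \<in> Cl \<and> (\<forall>v\<in>Os. pos u v \<notin> T))}))"
proof -
  define \<mu> where "\<mu> = Pi_pmf A False (\<lambda>_. bernoulli_pmf q)"
  define X where "X = lineX pos Cl Om Os T"
  define p where "p = q ^ card Om"
  define good where "good u \<longleftrightarrow> u \<in> Cl \<and> (\<forall>v\<in>Os. pos u v \<notin> T)" for u
  define pp where "pp u = (if good u then p else 0)" for u
  have p: "0 < p" "p < 1" unfolding p_def using q Om1 power_strict_decreasing[of 0 "card Om" q] by auto
  note F = f_fun_props[OF k p]
  have key: "(\<Sum>i<k. p ^ i * (1 - p) / f_fun k p ^ (i + 1)) \<le> 1" by (rule key_ineq[OF k p])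
  have ppv: "pp x = 0 \<or> pp x = p" for x unfolding pp_def by auto
  have indep: "measure_pmf.prob \<mu> (E1 \<inter> E2) = measure_pmf.prob \<mu> E1 * measure_pmf.prob \<mu> E2"
    if "I1 \<inter> I2 = {}" "depc X I1 E1" "depc X I2 E2" for I1 I2 E1 E2
  proof -
    have d: "deps (case_prod pos ` (I \<times> Om)) E" if "depc X I E" for I E
    proof -
      have "X u \<omega> = X u \<omega>'" if "\<forall>z\<in>case_prod pos ` (I \<times> Om). \<omega> z = \<omega>' z" "u \<in> I" for u \<omega> \<omega>'
        using that unfolding X_def lineX_def by auto
      note hX = this
      show ?thesis unfolding deps_def
      proof (intro allI impI)
        fix \<omega> \<omega>' :: "int \<times> int \<Rightarrow> bool"
        assume h: "\<forall>z\<in>case_prod pos ` (I \<times> Om). \<omega> z = \<omega>' z"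
        have h2: "\<forall>u\<in>I. X u \<omega> = X u \<omega>'" using hX[OF h] by blast
        have "(\<forall>x\<in>I. X x \<omega> = X x \<omega>') \<longrightarrow> (\<omega> \<in> E \<longleftrightarrow> \<omega>' \<in> E)"
          using \<open>depc X I E\<close> unfolding depc_def by (elim allE[of _ \<omega>] allE[of _ \<omega>'])
        then show "\<omega> \<in> E \<longleftrightarrow> \<omega>' \<in> E" using h2 by (rule mp)
      qed
    qed
    have "case_prod pos ` (I1 \<times> Om) \<inter> case_prod pos ` (I2 \<times> Om) = {}" using that(1) inj by fastforce
    then show ?thesis unfolding \<mu>_def by (rule Pi_indep[OF finA _ d[OF that(2)] d[OF that(3)]])
  qed
  have allp: "measure_pmf.prob \<mu> {\<omega>. \<forall>x\<in>I. X x \<omega>} = (\<Prod>x\<in>I. pp x)" if fI: "finite I" for I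
  proof (cases "\<forall>x\<in>I. good x")
    case False
    then obtain x where x: "x \<in> I" "\<not> good x" by auto
    then have "{\<omega>. \<forall>x\<in>I. X x \<omega>} = {}" unfolding X_def lineX_def good_def by auto
    moreover have "(\<Prod>x\<in>I. pp x) = 0" using x fI by (intro prod_zero) (auto simp: pp_def)
    ultimately show ?thesis by (metis measure_empty)
  next
    case True
    then have "{\<omega>. \<forall>x\<in>I. X x \<omega>} = {\<omega>. \<forall>z\<in>case_prod pos ` (I \<times> Om). \<omega> z}"
      unfolding X_def lineX_def good_def by auto
    moreover have "case_prod pos ` (I \<times> Om) \<subseteq> A"
    proof -
      have "I \<times> Om \<subseteq> Cl \<times> Om" using True unfolding good_def by auto
      then have "case_prod pos ` (I \<times> Om) \<subseteq> case_prod pos ` (Cl \<times> Om)" by (rule image_mono)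
      then show ?thesis using sub by (rule order_trans)
    qed
    ultimately have "measure_pmf.prob \<mu> {\<omega>. \<forall>x\<in>I. X x \<omega>} = q ^ card (case_prod pos ` (I \<times> Om))"
      unfolding \<mu>_def using prob_all_true[OF finA _, of "case_prod pos ` (I \<times> Om)" q] q by simp
    also have "card (case_prod pos ` (I \<times> Om)) = card I * card Om"
    proof -
      have "inj_on (case_prod pos) (I \<times> Om)" using inj by (auto simp: inj_on_def)
      then have "card (case_prod pos ` (I \<times> Om)) = card (I \<times> Om)" by (rule card_image)
      then show ?thesis by (simp add: card_cartesian_product)
    qed
    also have "q ^ (card I * card Om) = (\<Prod>x\<in>I. pp x)"
    proof -
      have "(\<Prod>x\<in>I. pp x) = (\<Prod>x\<in>I. q ^ card Om)" using True unfolding pp_def p_def by simp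
      also have "\<dots> = (q ^ card Om) ^ card I" by simp
      also have "\<dots> = q ^ (card I * card Om)" by (simp add: power_mult[symmetric] mult.commute)
      finally show ?thesis by simp
    qed
    finally show ?thesis .
  qed
  have "measure_pmf.prob \<mu> (NR k X {lo..hi})
     \<le> f_fun k p powr (real (card {lo..hi}) - (real k - 1) - real k * real (card {x\<in>{lo..hi}. pp x = 0}))"
    by (rule one_d_cc[OF k F(1) F(2) key ppv indep allp lohi])
  moreover have "{x\<in>{lo..hi}. pp x = 0} = {u\<in>{lo..hi}. \<not> (u \<in> Cl \<and> (\<forall>v\<in>Os. pos u v \<notin> T))}"
    unfolding pp_def good_def using p by auto
  ultimately show ?thesis unfolding \<mu>_def X_def p_def by simp
qed

lemma final_alg:
  fixes fa fb q s La Lb :: real and N k :: nat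
  assumes fa: "0 < fa" "fa \<le> 1" and fb: "0 < fb" "fb \<le> 1" and s: "s > 0" and q: "q = exp (- s)"
  shows "fb powr Lb * fa powr La * ((1 - q) * (1 / (fa ^ k * fb ^ k)) + q) ^ N
     \<le> exp (- La * (- ln fa) - Lb * (- ln fb) + real N * s * exp (real k * ((- ln fa) + (- ln fb))))"
proof -
  define \<theta> where "\<theta> = 1 / (fa ^ k * fb ^ k)"
  have th: "\<theta> = exp (real k * ((- ln fa) + (- ln fb)))"
  proof -
    have "exp (real k * ((- ln fa) + (- ln fb))) = inverse (exp (real k * ln fa) * exp (real k * ln fb))"
      by (simp add: algebra_simps exp_add[symmetric] exp_minus[symmetric])
    also have "exp (real k * ln fa) = fa ^ k" using fa by (simp add: exp_of_nat_mult)
    also have "exp (real k * ln fb) = fb ^ k" using fb by (simp add: exp_of_nat_mult)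
    finally show ?thesis unfolding \<theta>_def by (simp add: field_simps)
  qed
  have th1: "\<theta> \<ge> 1"
  proof -
    have "fa ^ k \<le> 1" "fb ^ k \<le> 1" using fa fb by (auto intro: power_le_one)
    moreover have "fa ^ k > 0" "fb ^ k > 0" using fa fb by auto
    ultimately have "fa ^ k * fb ^ k \<le> 1" "fa ^ k * fb ^ k > 0" by (auto intro: mult_le_one)
    then show ?thesis unfolding \<theta>_def by simp
  qed
  have q1: "1 - q \<le> s" "q \<le> 1" "0 < q" using exp_ge_add_one_self[of "- s"] s unfolding q by auto
  define Z where "Z = (1 - q) * \<theta> + q"
  have Z0: "0 \<le> Z" unfolding Z_def using q1 th1 by auto
  have "Z = 1 + (1 - q) * (\<theta> - 1)" unfolding Z_def by (simp add: algebra_simps)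
  also have "\<dots> \<le> exp ((1 - q) * (\<theta> - 1))" by (rule exp_ge_add_one_self)
  also have "\<dots> \<le> exp (s * \<theta>)"
  proof -
    have "(1 - q) * (\<theta> - 1) \<le> s * (\<theta> - 1)" using q1 th1 by (intro mult_right_mono) auto
    also have "\<dots> \<le> s * \<theta>" using s by simp
    finally show ?thesis by simp
  qed
  finally have Zb: "Z \<le> exp (s * \<theta>)" .
  have "Z ^ N \<le> exp (s * \<theta>) ^ N" using Zb Z0 by (rule power_mono)
  also have "\<dots> = exp (real N * s * \<theta>)" by (simp add: exp_of_nat_mult[symmetric] algebra_simps)
  finally have ZN: "Z ^ N \<le> exp (real N * s * \<theta>)" .
  have "fb powr Lb * fa powr La = exp (Lb * ln fb + La * ln fa)"
    using fa fb by (simp add: powr_def exp_add algebra_simps)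
  then have "fb powr Lb * fa powr La * Z ^ N \<le> exp (Lb * ln fb + La * ln fa) * exp (real N * s * \<theta>)"
    using ZN by (simp add: mult_left_mono)
  also have "\<dots> = exp (- La * (- ln fa) - Lb * (- ln fb) + real N * s * \<theta>)"
    by (simp add: exp_add[symmetric] algebra_simps)
  finally show ?thesis unfolding Z_def \<theta>_def[symmetric] th .
qed

theorem mainTheorem11:
  fixes k a b l m :: nat and s :: real and x0 y0 x0' y0' :: int
  assumes "k \<ge> 1" and "s > 0" and "a \<ge> 1" and "b \<ge> 1"
    and "rect x0 y0 a b \<subseteq> rect x0' y0' (a + l) (b + m)"
  shows "measure_pmf.prob (site_pmf s (rect x0' y0' (a + l) (b + m)))
           (D_event k x0 y0 a b x0' y0' (a + l) (b + m))
         \<le> exp (- (real m - 2 * (real k - 1)) * g_fun k (real a * s)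
                - (real l - 2 * (real k - 1)) * g_fun k (real b * s)
                + real l * real m * s * exp (real k * (g_fun k (real a * s) + g_fun k (real b * s))))"
proof -
  note k = assms(1) and s = assms(2) and a1 = assms(3) and b1 = assms(4) and RR = assms(5)
  have "(x0, y0) \<in> rect x0 y0 a b" "(x0 + int a - 1, y0 + int b - 1) \<in> rect x0 y0 a b"
    using a1 b1 unfolding rect_def by auto
  then have "(x0, y0) \<in> rect x0' y0' (a + l) (b + m)" "(x0 + int a - 1, y0 + int b - 1) \<in> rect x0' y0' (a + l) (b + m)"
    using RR by auto
  then have g: "x0' \<le> x0" "x0 + int a \<le> x0' + int (a + l)" "y0' \<le> y0" "y0 + int b \<le> y0' + int (b + m)"
    unfolding rect_def by auto
  define q where "q = exp (- s)"
  have q: "0 < q" "q < 1" unfolding q_def using s by auto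
  define Rp where "Rp = rect x0' y0' (a + l) (b + m)"
  define Xp where "Xp = {x0' .. x0' + int (a + l) - 1}"
  define Yp where "Yp = {y0' .. y0' + int (b + m) - 1}"
  define Lc where "Lc = {x0' .. x0 - 1}"
  define Rc where "Rc = {x0 + int a .. x0' + int (a + l) - 1}"
  define Xm where "Xm = {x0 .. x0 + int a - 1}"
  define Bc where "Bc = {y0' .. y0 - 1}"
  define Tc where "Tc = {y0 + int b .. y0' + int (b + m) - 1}"
  define Ym where "Ym = {y0 .. y0 + int b - 1}"
  define C where "C = Lc \<union> Rc"
  define S where "S = Bc \<union> Tc"
  define K where "K = C \<times> S"
  have Rp_eq: "Rp = Xp \<times> Yp" unfolding Rp_def Xp_def Yp_def rect_def ..
  have finRp: "finite Rp" unfolding Rp_eq Xp_def Yp_def by simp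
  have Xp_eq: "Xp = C \<union> Xm" "C \<inter> Xm = {}" "Lc \<inter> Rc = {}"
    unfolding Xp_def C_def Lc_def Rc_def Xm_def using g by auto
  have Yp_eq: "Yp = S \<union> Ym" "S \<inter> Ym = {}" "Bc \<inter> Tc = {}"
    unfolding Yp_def S_def Bc_def Tc_def Ym_def using g by auto
  have cardC: "card Lc + card Rc = l" unfolding Lc_def Rc_def using g by auto
  have cardS: "card Bc + card Tc = m" unfolding Bc_def Tc_def using g by auto
  have finLR: "finite Lc" "finite Rc" "finite Bc" "finite Tc" "finite Xm" "finite Ym"
    unfolding Lc_def Rc_def Bc_def Tc_def Xm_def Ym_def by auto
  have cC: "card C = l" unfolding C_def using cardC Xp_eq(3) finLR by (simp add: card_Un_disjoint)
  have cS: "card S = m" unfolding S_def using cardS Yp_eq(3) finLR by (simp add: card_Un_disjoint)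
  have cK: "card K = l * m" unfolding K_def using cC cS by (simp add: card_cartesian_product)
  have cXm: "card Xm = a" "card Ym = b" unfolding Xm_def Ym_def by auto
  have finK: "finite K" unfolding K_def C_def S_def using finLR by auto
  have KRp: "K \<subseteq> Rp" unfolding K_def Rp_eq using Xp_eq Yp_eq by auto
  define \<mu> where "\<mu> = Pi_pmf Rp False (\<lambda>_. bernoulli_pmf q)"
  have mu: "site_pmf s Rp = \<mu>" unfolding site_pmf_def \<mu>_def q_def ..
  define colX where "colX T = lineX (\<lambda>u v. (u, v)) C Ym S T" for T
  define rowX where "rowX T = lineX (\<lambda>u v. (v, u)) S Xm C T" for T
  define AT where "AT T = NR k (colX T) Lc \<inter> NR k (colX T) Rc" for T
  define BT where "BT T = NR k (rowX T) Bc \<inter> NR k (rowX T) Tc" for T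
  define NE where "NE T = {\<omega>. {z\<in>K. \<not> \<omega> z} = T}" for T
  define D where "D = D_event k x0 y0 a b x0' y0' (a + l) (b + m)"
  have step1: "D \<subseteq> (\<Union>T\<in>Pow K. NE T \<inter> (AT T \<inter> BT T))"
  proof
    fix \<omega> assume w: "\<omega> \<in> D"
    define T where "T = {z\<in>K. \<not> \<omega> z}"
    have TK: "T \<in> Pow K" unfolding T_def by auto
    have NEw: "\<omega> \<in> NE T" unfolding NE_def T_def by simp
    have colfull: "\<omega> (x, y)" if "colX T x \<omega>" "y \<in> Yp" for x y
    proof (cases "y \<in> Ym")
      case True then show ?thesis using that unfolding colX_def lineX_def by auto
    next
      case False
      then have "y \<in> S" using that(2) Yp_eq by auto
      moreover have "x \<in> C" "\<forall>v\<in>S. (x, v) \<notin> T" using that(1) unfolding colX_def lineX_def by auto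
      ultimately show ?thesis unfolding T_def K_def by auto
    qed
    have rowfull: "\<omega> (x, y)" if "rowX T y \<omega>" "x \<in> Xp" for x y
    proof (cases "x \<in> Xm")
      case True then show ?thesis using that unfolding rowX_def lineX_def by auto
    next
      case False
      then have "x \<in> C" using that(2) Xp_eq by auto
      moreover have "y \<in> S" "\<forall>v\<in>C. (v, y) \<notin> T" using that(1) unfolding rowX_def lineX_def by auto
      ultimately show ?thesis unfolding T_def K_def by auto
    qed
    have Dw: "\<not> empty_cols k Lc Yp \<omega>" "\<not> empty_cols k Rc Yp \<omega>"
       "\<not> empty_rows k Bc Xp \<omega>" "\<not> empty_rows k Tc Xp \<omega>"
      using w unfolding D_def D_event_def Lc_def Rc_def Bc_def Tc_def Xp_def Yp_def by auto
    have c1: "\<omega> \<in> NR k (colX T) J" if "\<not> empty_cols k J Yp \<omega>" for J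
    proof -
      have "\<not> (\<exists>c. {c..c + int k - 1} \<subseteq> J \<and> (\<forall>x\<in>{c..c + int k - 1}. colX T x \<omega>))"
      proof
        assume "\<exists>c. {c..c + int k - 1} \<subseteq> J \<and> (\<forall>x\<in>{c..c + int k - 1}. colX T x \<omega>)"
        then obtain c where c: "{c..c + int k - 1} \<subseteq> J" "\<forall>x\<in>{c..c + int k - 1}. colX T x \<omega>" by blast
        then have "\<forall>x\<in>{c..c + int k - 1}. \<forall>y\<in>Yp. \<omega> (x, y)" using colfull by blast
        then have "empty_cols k J Yp \<omega>" unfolding empty_cols_def using c(1) by blast
        then show False using that by simp
      qed
      then show ?thesis unfolding NR_def by simp
    qed
    have r1: "\<omega> \<in> NR k (rowX T) J" if "\<not> empty_rows k J Xp \<omega>" for J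
    proof -
      have "\<not> (\<exists>c. {c..c + int k - 1} \<subseteq> J \<and> (\<forall>y\<in>{c..c + int k - 1}. rowX T y \<omega>))"
      proof
        assume "\<exists>c. {c..c + int k - 1} \<subseteq> J \<and> (\<forall>y\<in>{c..c + int k - 1}. rowX T y \<omega>)"
        then obtain c where c: "{c..c + int k - 1} \<subseteq> J" "\<forall>y\<in>{c..c + int k - 1}. rowX T y \<omega>" by blast
        then have "\<forall>y\<in>{c..c + int k - 1}. \<forall>x\<in>Xp. \<omega> (x, y)" using rowfull by blast
        then have "empty_rows k J Xp \<omega>" unfolding empty_rows_def using c(1) by blast
        then show False using that by simp
      qed
      then show ?thesis unfolding NR_def by simp
    qed
    have "\<omega> \<in> AT T" unfolding AT_def using c1 Dw by blast
    moreover have "\<omega> \<in> BT T" unfolding BT_def using r1 Dw by blast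
    ultimately show "\<omega> \<in> (\<Union>T\<in>Pow K. NE T \<inter> (AT T \<inter> BT T))" using TK NEw by blast
  qed
  have step2: "measure_pmf.prob \<mu> (NE T \<inter> (AT T \<inter> BT T)) \<le> (\<Prod>z\<in>T. 1 - q) * (\<Prod>z\<in>K - T. q) *
      (f_fun k (q ^ b) powr (real l - 2 * (real k - 1) - real k * real (card T)) *
       f_fun k (q ^ a) powr (real m - 2 * (real k - 1) - real k * real (card T)))" if T: "T \<subseteq> K" for T
  proof -
    have fT: "finite T" using T finK by (auto intro: finite_subset)
    have im1: "case_prod (\<lambda>u v. (u, v)) ` (J \<times> W) = J \<times> W" for J W :: "int set" by auto
    have im2: "case_prod (\<lambda>u v. (v, u)) ` (J \<times> W) = W \<times> J" for J W :: "int set" by auto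
    have dL: "deps (Lc \<times> Ym) (NR k (colX T) Lc)" "deps (Rc \<times> Ym) (NR k (colX T) Rc)"
      unfolding colX_def using lineX_deps2[of "\<lambda>u v. (u, v)" _ Ym k C S T] im1 by metis+
    have dB: "deps (Xm \<times> Bc) (NR k (rowX T) Bc)" "deps (Xm \<times> Tc) (NR k (rowX T) Tc)"
      unfolding rowX_def using lineX_deps2[of "\<lambda>u v. (v, u)" _ Xm k S C T] im2 by metis+
    have dAT: "deps (C \<times> Ym) (AT T)" unfolding AT_def
      by (rule deps_Int; rule deps_mono[OF dL(1)] deps_mono[OF dL(2)]) (auto simp: C_def)
    have dBT: "deps (Xm \<times> S) (BT T)" unfolding BT_def
      by (rule deps_Int; rule deps_mono[OF dB(1)] deps_mono[OF dB(2)]) (auto simp: S_def)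
    have dNE: "deps K (NE T)"
    proof (unfold deps_def, intro allI impI)
      fix \<omega> \<omega>' :: "int \<times> int \<Rightarrow> bool" assume h: "\<forall>z\<in>K. \<omega> z = \<omega>' z"
      then have "{z\<in>K. \<not> \<omega> z} = {z\<in>K. \<not> \<omega>' z}" by auto
      then show "\<omega> \<in> NE T \<longleftrightarrow> \<omega>' \<in> NE T" unfolding NE_def by simp
    qed
    have i1: "measure_pmf.prob \<mu> (NE T \<inter> (AT T \<inter> BT T)) = measure_pmf.prob \<mu> (NE T) * measure_pmf.prob \<mu> (AT T \<inter> BT T)"
      unfolding \<mu>_def
    proof (rule Pi_indep[OF finRp _ dNE])
      show "K \<inter> (C \<times> Ym \<union> Xm \<times> S) = {}" unfolding K_def using Xp_eq Yp_eq by auto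
      show "deps (C \<times> Ym \<union> Xm \<times> S) (AT T \<inter> BT T)"
        by (rule deps_Int; rule deps_mono[OF dAT] deps_mono[OF dBT]) auto
    qed
    have i2: "measure_pmf.prob \<mu> (AT T \<inter> BT T) = measure_pmf.prob \<mu> (AT T) * measure_pmf.prob \<mu> (BT T)"
      unfolding \<mu>_def by (rule Pi_indep[OF finRp _ dAT dBT]) (use Xp_eq Yp_eq in auto)
    have i3: "measure_pmf.prob \<mu> (AT T) = measure_pmf.prob \<mu> (NR k (colX T) Lc) * measure_pmf.prob \<mu> (NR k (colX T) Rc)"
      unfolding \<mu>_def AT_def by (rule Pi_indep[OF finRp _ dL(1) dL(2)]) (use Xp_eq in auto)
    have i4: "measure_pmf.prob \<mu> (BT T) = measure_pmf.prob \<mu> (NR k (rowX T) Bc) * measure_pmf.prob \<mu> (NR k (rowX T) Tc)"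
      unfolding \<mu>_def BT_def by (rule Pi_indep[OF finRp _ dB(1) dB(2)]) (use Yp_eq in auto)
    have pNE: "measure_pmf.prob \<mu> (NE T) = (\<Prod>z\<in>T. 1 - q) * (\<Prod>z\<in>K - T. q)"
      unfolding \<mu>_def NE_def by (rule prob_config[OF finRp KRp T]) (use q in auto)
    have injc: "\<And>u v u' v'. (u, v) = (u', v') \<Longrightarrow> u = u' \<and> v = v'" by auto
    have injr: "\<And>u v u' v'. (v, u) = (v', u') \<Longrightarrow> u = u' \<and> v = v'" by auto
    have subc: "case_prod (\<lambda>u v. (u, v)) ` (C \<times> Ym) \<subseteq> Rp" unfolding im1 Rp_eq using Xp_eq Yp_eq by auto
    have subr: "case_prod (\<lambda>u v. (v, u)) ` (S \<times> Xm) \<subseteq> Rp" unfolding im2 Rp_eq using Xp_eq Yp_eq by auto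
    define badc where "badc J = card {u\<in>J. \<not> (u \<in> C \<and> (\<forall>v\<in>S. (u, v) \<notin> T))}" for J
    define badr where "badr J = card {u\<in>J. \<not> (u \<in> S \<and> (\<forall>v\<in>C. (v, u) \<notin> T))}" for J
    have bL: "measure_pmf.prob \<mu> (NR k (colX T) Lc) \<le> f_fun k (q ^ b) powr (real (card Lc) - (real k - 1) - real k * real (badc Lc))"
      using line_bound[OF injc finRp q k finLR(6) _ subc, of x0' "x0 - 1" S T] cXm g a1 b1
      unfolding \<mu>_def colX_def badc_def Lc_def by simp
    have bR: "measure_pmf.prob \<mu> (NR k (colX T) Rc) \<le> f_fun k (q ^ b) powr (real (card Rc) - (real k - 1) - real k * real (badc Rc))"
      using line_bound[OF injc finRp q k finLR(6) _ subc, of "x0 + int a" "x0' + int (a + l) - 1" S T] cXm g a1 b1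
      unfolding \<mu>_def colX_def badc_def Rc_def by simp
    have bB: "measure_pmf.prob \<mu> (NR k (rowX T) Bc) \<le> f_fun k (q ^ a) powr (real (card Bc) - (real k - 1) - real k * real (badr Bc))"
      using line_bound[OF injr finRp q k finLR(5) _ subr, of y0' "y0 - 1" C T] cXm g a1 b1
      unfolding \<mu>_def rowX_def badr_def Bc_def by simp
    have bT: "measure_pmf.prob \<mu> (NR k (rowX T) Tc) \<le> f_fun k (q ^ a) powr (real (card Tc) - (real k - 1) - real k * real (badr Tc))"
      using line_bound[OF injr finRp q k finLR(5) _ subr, of "y0 + int b" "y0' + int (b + m) - 1" C T] cXm g a1 b1
      unfolding \<mu>_def rowX_def badr_def Tc_def by simp
    have badc_le: "badc Lc + badc Rc \<le> card T"
    proof -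
      have "{u\<in>Lc. \<not> (u \<in> C \<and> (\<forall>v\<in>S. (u, v) \<notin> T))} \<union> {u\<in>Rc. \<not> (u \<in> C \<and> (\<forall>v\<in>S. (u, v) \<notin> T))} \<subseteq> fst ` T"
        unfolding C_def by force
      then have "card ({u\<in>Lc. \<not> (u \<in> C \<and> (\<forall>v\<in>S. (u, v) \<notin> T))} \<union> {u\<in>Rc. \<not> (u \<in> C \<and> (\<forall>v\<in>S. (u, v) \<notin> T))}) \<le> card (fst ` T)"
        using fT by (intro card_mono) auto
      also have "\<dots> \<le> card T" using fT by (rule card_image_le)
      finally show ?thesis unfolding badc_def using Xp_eq(3) finLR by (subst (asm) card_Un_disjoint) auto
    qed
    have badr_le: "badr Bc + badr Tc \<le> card T"
    proof -
      have "{u\<in>Bc. \<not> (u \<in> S \<and> (\<forall>v\<in>C. (v, u) \<notin> T))} \<union> {u\<in>Tc. \<not> (u \<in> S \<and> (\<forall>v\<in>C. (v, u) \<notin> T))} \<subseteq> snd ` T"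
        unfolding S_def by force
      then have "card ({u\<in>Bc. \<not> (u \<in> S \<and> (\<forall>v\<in>C. (v, u) \<notin> T))} \<union> {u\<in>Tc. \<not> (u \<in> S \<and> (\<forall>v\<in>C. (v, u) \<notin> T))}) \<le> card (snd ` T)"
        using fT by (intro card_mono) auto
      also have "\<dots> \<le> card T" using fT by (rule card_image_le)
      finally show ?thesis unfolding badr_def using Yp_eq(3) finLR by (subst (asm) card_Un_disjoint) auto
    qed
    have pa': "0 < q ^ a" "q ^ a < 1" "0 < q ^ b" "q ^ b < 1"
      using q a1 b1 power_strict_decreasing[of 0 a q] power_strict_decreasing[of 0 b q] by auto
    define fa' where "fa' = f_fun k (q ^ a)"
    define fb' where "fb' = f_fun k (q ^ b)"
    have fa': "0 < fa'" "fa' \<le> 1" unfolding fa'_def using f_fun_props[OF k pa'(1,2)] by auto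
    have fb': "0 < fb'" "fb' \<le> 1" unfolding fb'_def using f_fun_props[OF k pa'(3,4)] by auto
    have colb: "measure_pmf.prob \<mu> (AT T) \<le> fb' powr (real l - 2 * (real k - 1) - real k * real (card T))"
    proof -
      have "measure_pmf.prob \<mu> (AT T) \<le> fb' powr (real (card Lc) - (real k - 1) - real k * real (badc Lc))
           * fb' powr (real (card Rc) - (real k - 1) - real k * real (badc Rc))"
        unfolding i3 fb'_def by (rule mult_mono[OF bL bR]) auto
      also have "\<dots> = fb' powr (real l - 2 * (real k - 1) - real k * real (badc Lc + badc Rc))"
      proof -
        have rl: "real l = real (card Lc) + real (card Rc)" using cardC by simp
        have "(real (card Lc) - (real k - 1) - real k * real (badc Lc)) + (real (card Rc) - (real k - 1) - real k * real (badc Rc))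
            = real l - 2 * (real k - 1) - real k * real (badc Lc + badc Rc)"
          unfolding rl by (simp add: algebra_simps)
        then show ?thesis unfolding powr_add[symmetric] by (rule arg_cong)
      qed
      also have "\<dots> \<le> fb' powr (real l - 2 * (real k - 1) - real k * real (card T))"
        using fb' badc_le by (intro powr_mono') (auto intro: mult_left_mono)
      finally show ?thesis .
    qed
    have rowb: "measure_pmf.prob \<mu> (BT T) \<le> fa' powr (real m - 2 * (real k - 1) - real k * real (card T))"
    proof -
      have "measure_pmf.prob \<mu> (BT T) \<le> fa' powr (real (card Bc) - (real k - 1) - real k * real (badr Bc))
           * fa' powr (real (card Tc) - (real k - 1) - real k * real (badr Tc))"
        unfolding i4 fa'_def by (rule mult_mono[OF bB bT]) auto
      also have "\<dots> = fa' powr (real m - 2 * (real k - 1) - real k * real (badr Bc + badr Tc))"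
      proof -
        have rl: "real m = real (card Bc) + real (card Tc)" using cardS by simp
        have "(real (card Bc) - (real k - 1) - real k * real (badr Bc)) + (real (card Tc) - (real k - 1) - real k * real (badr Tc))
            = real m - 2 * (real k - 1) - real k * real (badr Bc + badr Tc)"
          unfolding rl by (simp add: algebra_simps)
        then show ?thesis unfolding powr_add[symmetric] by (rule arg_cong)
      qed
      also have "\<dots> \<le> fa' powr (real m - 2 * (real k - 1) - real k * real (card T))"
        using fa' badr_le by (intro powr_mono') (auto intro: mult_left_mono)
      finally show ?thesis .
    qed
    have "measure_pmf.prob \<mu> (NE T \<inter> (AT T \<inter> BT T)) = measure_pmf.prob \<mu> (NE T) * (measure_pmf.prob \<mu> (AT T) * measure_pmf.prob \<mu> (BT T))"
      unfolding i1 i2 ..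
    also have "\<dots> \<le> measure_pmf.prob \<mu> (NE T) * (fb' powr (real l - 2 * (real k - 1) - real k * real (card T)) *
         fa' powr (real m - 2 * (real k - 1) - real k * real (card T)))"
      by (intro mult_left_mono mult_mono colb rowb) auto
    finally show ?thesis unfolding pNE fa'_def fb'_def .
  qed
  define fa where "fa = f_fun k (q ^ a)"
  define fb where "fb = f_fun k (q ^ b)"
  have qa: "q ^ a = exp (- (real a * s))" "q ^ b = exp (- (real b * s))"
    unfolding q_def by (simp_all add: exp_of_nat_mult[symmetric])
  have pa: "0 < q ^ a" "q ^ a < 1" "0 < q ^ b" "q ^ b < 1"
    using q a1 b1 power_strict_decreasing[of 0 a q] power_strict_decreasing[of 0 b q] by auto
  have fa: "0 < fa" "fa \<le> 1" unfolding fa_def using f_fun_props[OF k pa(1,2)] by auto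
  have fb: "0 < fb" "fb \<le> 1" unfolding fb_def using f_fun_props[OF k pa(3,4)] by auto
  have ga: "g_fun k (real a * s) = - ln fa" unfolding g_fun_def fa_def qa ..
  have gb: "g_fun k (real b * s) = - ln fb" unfolding g_fun_def fb_def qa ..
  define La where "La = real m - 2 * (real k - 1)"
  define Lb where "Lb = real l - 2 * (real k - 1)"
  define \<theta> where "\<theta> = 1 / (fa ^ k * fb ^ k)"
  have th0: "0 < \<theta>" unfolding \<theta>_def using fa fb by simp
  have powk: "fv powr (L - real k * real n) = fv powr L * (1 / fv ^ k) ^ n" if "0 < fv" for fv L n
  proof -
    have "fv powr (L - real k * real n) = fv powr L / fv powr (real (k * n))" by (simp add: powr_diff)
    also have "fv powr (real (k * n)) = fv ^ (k * n)" by (rule powr_realpow[OF that])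
    also have "\<dots> = (fv ^ k) ^ n" by (simp add: power_mult)
    finally show ?thesis by (simp add: power_one_over field_simps)
  qed
  have "measure_pmf.prob \<mu> D \<le> measure_pmf.prob \<mu> (\<Union>T\<in>Pow K. NE T \<inter> (AT T \<inter> BT T))"
    using step1 by (intro measure_pmf.finite_measure_mono) auto
  also have "\<dots> \<le> (\<Sum>T\<in>Pow K. measure_pmf.prob \<mu> (NE T \<inter> (AT T \<inter> BT T)))"
    using finK by (intro measure_pmf.finite_measure_subadditive_finite) auto
  also have "\<dots> \<le> (\<Sum>T\<in>Pow K. (\<Prod>z\<in>T. 1 - q) * (\<Prod>z\<in>K - T. q) *
      (fb powr (Lb - real k * real (card T)) * fa powr (La - real k * real (card T))))"
    unfolding fa_def fb_def La_def Lb_def by (intro sum_mono step2) auto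
  also have "\<dots> = (\<Sum>T\<in>Pow K. fb powr Lb * fa powr La * ((\<Prod>z\<in>T. (1 - q) * \<theta>) * (\<Prod>z\<in>K - T. q)))"
  proof (intro sum.cong refl)
    fix T assume "T \<in> Pow K"
    then have fT: "finite T" using finK by (auto intro: finite_subset)
    have P: "(\<Prod>z\<in>T. (1 - q) * \<theta>) = (\<Prod>z\<in>T. 1 - q) * \<theta> ^ card T" using fT by (simp add: power_mult_distrib)
    have "\<theta> = (1 / fb ^ k) * (1 / fa ^ k)" unfolding \<theta>_def by simp
    then have Q: "\<theta> ^ card T = (1 / fb ^ k) ^ card T * (1 / fa ^ k) ^ card T"
      by (simp only: power_mult_distrib)
    have e1: "fb powr (Lb - real k * real (card T)) = fb powr Lb * (1 / fb ^ k) ^ card T" by (rule powk[OF fb(1)])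
    have e2: "fa powr (La - real k * real (card T)) = fa powr La * (1 / fa ^ k) ^ card T" by (rule powk[OF fa(1)])
    show "(\<Prod>z\<in>T. 1 - q) * (\<Prod>z\<in>K - T. q) *
      (fb powr (Lb - real k * real (card T)) * fa powr (La - real k * real (card T))) =
      fb powr Lb * fa powr La * ((\<Prod>z\<in>T. (1 - q) * \<theta>) * (\<Prod>z\<in>K - T. q))"
      unfolding e1 e2 P Q by (simp only: mult_ac)
  qed
  also have "\<dots> = fb powr Lb * fa powr La * (\<Prod>z\<in>K. (1 - q) * \<theta> + q)"
    unfolding prod_add[OF finK, of "\<lambda>_. (1 - q) * \<theta>" "\<lambda>_. q"] sum_distrib_left ..
  also have "(\<Prod>z\<in>K. (1 - q) * \<theta> + q) = ((1 - q) * \<theta> + q) ^ (l * m)" using cK by simp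
  also have "fb powr Lb * fa powr La * ((1 - q) * \<theta> + q) ^ (l * m)
     \<le> exp (- La * (- ln fa) - Lb * (- ln fb) + real (l * m) * s * exp (real k * ((- ln fa) + (- ln fb))))"
    unfolding \<theta>_def by (rule final_alg[OF fa fb s q_def])
  finally show ?thesis unfolding mu[symmetric] Rp_def[symmetric] D_def[symmetric] ga gb La_def Lb_def
    by simp
qed

end
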